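(* For every nonempty rooted tree $t$ with $|t|$ vertices, write $\Lambda(t)=\sum_{s=1}^{|t|}\omega_s(t)x^s$. Then $$\omega(t)=\sum_{s\ge1}\frac{(-1)^{s+1}}{s}\,\omega_s(t).$$
   Context: Let $k$ be a field of characteristic $0$. $\mathcal A=k[x]$ with the quasi-shuffle product $\diamond$ determined by $\mathbf 1\diamond u=u\diamond\mathbf 1=u$ and $x^k\diamond x^l=(x^{k-1}\diamond x^l)x+(x^k\diamond x^{l-1})x+(x^{k-1}\diamond x^{l-1})x$ ($k,l\ge1$). $\mathcal H_{CK}$ is the Connes–Kreimer Hopf algebra of rooted forests (free commutative algebra on nonempty non-planar rooted trees, unit the empty forest $\mathbf 1$, counit $\varepsilon$, coproduct by admissible cuts $\Delta_{CK}(u)=\sum v\otimes w$ over decompositions of the vertex set of $u$ into $V\sqcup W$ with no vertex of $V$ strictly below a vertex of $W$). $B_+$ grafts a forest onto a new root; $\Lambda:\mathcal H_{CK}\to\mathcal A$ is the unique unital algebra morphism with $\Lambda(B_+(t_1\cdots t_n))=(\Lambda(t_1)\diamond\cdots\diamond\Lambda(t_n))x$. $\delta$ is the character of $\mathcal H_{CK}$ with $\delta(\bullet)=1$ ($\bullet$ the one-vertex tree) and $\delta(t)=0$ for trees with at least two vertices, and $\omega=\log^*\delta=\sum_{n\ge1}\frac{(-1)^{n+1}}{n}(\delta-\varepsilon)^{*n}$ with $*$ the convolution of $\mathcal H_{CK}^*$. *)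

theory Defs
  imports "HOL-Library.Multiset" "HOL-Library.Sublist" "HOL-Computational_Algebra.Polynomial"
begin

fun qsh :: "nat \<Rightarrow> nat \<Rightarrow> 'a::comm_ring_1 poly" where
  "qsh 0 l = monom 1 l"
| "qsh (Suc k) 0 = monom 1 (Suc k)"
| "qsh (Suc k) (Suc l) = (qsh k (Suc l) + qsh (Suc k) l + qsh k l) * monom 1 1"

text \<open>Bilinear extension of the quasi-shuffle product on monomials.\<close>
definition qs :: "'a::comm_ring_1 poly \<Rightarrow> 'a poly \<Rightarrow> 'a poly" where
  "qs p q = (\<Sum>i\<le>degree p. \<Sum>j\<le>degree q. smult (coeff p i * coeff q j) (qsh i j))"

text \<open>Non-planar rooted trees (children form a multiset); forests are multisets of trees.\<close>
datatype tree = Node "tree multiset"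
type_synonym forest = "tree multiset"

definition bullet :: tree where "bullet = Node {#}"

text \<open>Planar representatives, used to give names (positions) to vertices.\<close>
datatype ptree = PNode "ptree list"

primrec np :: "ptree \<Rightarrow> tree" where
  "np (PNode ts) = Node (mset (map np ts))"

text \<open>Positions of vertices of a planar tree: the root is [], the j-th child's
  vertices are prefixed by j.\<close>
inductive ppos :: "ptree \<Rightarrow> nat list \<Rightarrow> bool" where
  "ppos t []"
| "i < length ts \<Longrightarrow> ppos (ts ! i) p \<Longrightarrow> ppos (PNode ts) (i # p)"

text \<open>Vertex set of a planar forest ts: positions i#p, p a vertex of the i-th tree.
  A vertex v is strictly below w iff v is a proper prefix of w.\<close>
definition fpos :: "ptree list \<Rightarrow> nat list set" where
  "fpos ts = {q. ppos (PNode ts) q \<and> q \<noteq> []}"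

text \<open>Induced subforest on a vertex set S: returns (tree to be attached to the parent, loose trees).\<close>
function ind :: "nat list \<Rightarrow> nat list set \<Rightarrow> ptree \<Rightarrow> forest \<times> forest" where
  "ind p S (PNode ts) =
     (let rs = map (\<lambda>i. ind (p @ [i]) S (ts ! i)) [0..<length ts];
          att = sum_list (map fst rs); loose = sum_list (map snd rs)
      in if p \<in> S then ({#Node att#}, loose) else ({#}, att + loose))"
  by pat_completeness auto
termination
  by (relation "measure (\<lambda>(p, S, t). size t)")
     (auto simp: less_Suc_eq_le intro!: size_list_estimation' nth_mem)

definition restr :: "ptree list \<Rightarrow> nat list set \<Rightarrow> forest" where
  "restr ts S = snd (ind [] (S - {[]}) (PNode ts))"

definition rep :: "forest \<Rightarrow> ptree list" where
  "rep F = (SOME ts. mset (map np ts) = F)"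

section \<open>Dual of H_CK: linear forms = functions on forests\<close>

text \<open>Admissible cuts: V \<sqinter> W = vertex set, no vertex of V strictly below a vertex of W;
  the term is (forest on V) \<otimes> (forest on W).\<close>
definition admissible :: "ptree list \<Rightarrow> nat list set \<Rightarrow> bool" where
  "admissible ts V \<longleftrightarrow> V \<subseteq> fpos ts \<and>
     (\<forall>v\<in>V. \<forall>w\<in>fpos ts - V. \<not> strict_prefix v w)"

definition conv :: "(forest \<Rightarrow> 'a::comm_ring_1) \<Rightarrow> (forest \<Rightarrow> 'a) \<Rightarrow> forest \<Rightarrow> 'a" where
  "conv f g F = (let ts = rep F in
      \<Sum>V \<in> {V. admissible ts V}. f (restr ts V) * g (restr ts (fpos ts - V)))"

definition eps :: "forest \<Rightarrow> 'a::comm_ring_1" where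
  "eps F = (if F = {#} then 1 else 0)"

primrec cpow :: "(forest \<Rightarrow> 'a::comm_ring_1) \<Rightarrow> nat \<Rightarrow> forest \<Rightarrow> 'a" where
  "cpow f 0 = eps"
| "cpow f (Suc n) = conv f (cpow f n)"

definition deltaT :: "tree \<Rightarrow> 'a::comm_ring_1" where
  "deltaT t = (if t = bullet then 1 else 0)"

definition delta :: "forest \<Rightarrow> 'a::comm_ring_1" where
  "delta F = prod_mset (image_mset deltaT F)"

text \<open>omega = log* delta, the series being pointwise finite (its value on F is the
  sum of the finitely many nonzero terms).\<close>
definition omega_term :: "nat \<Rightarrow> forest \<Rightarrow> 'a::field_char_0" where
  "omega_term n F = (-1) ^ (n + 1) / of_nat n * cpow (\<lambda>G. delta G - eps G) n F"

definition omega :: "forest \<Rightarrow> 'a::field_char_0" where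
  "omega F = (\<Sum>n \<in> {n. 1 \<le> n \<and> omega_term n F \<noteq> (0::'a)}. omega_term n F)"

primrec lamp :: "ptree \<Rightarrow> 'a::comm_ring_1 poly" where
  "lamp (PNode ts) = foldr qs (map lamp ts) 1 * monom 1 1"

definition Lambda :: "tree \<Rightarrow> 'a::comm_ring_1 poly" where
  "Lambda t = lamp (SOME p. np p = t)"

end

theory Submission
  imports Defs
begin


definition B :: "(nat \<Rightarrow> 'a::comm_ring_1) \<Rightarrow> nat \<Rightarrow> 'a" where
  "B u m = (\<Sum>k\<le>m. u k * of_nat (m choose k))"

lemma B_ext: "m \<le> N \<Longrightarrow> B u m = (\<Sum>k\<le>N. u k * of_nat (m choose k))"
  unfolding B_def by (rule sum.mono_neutral_left) (simp_all add: binomial_eq_0)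

lemma B_0: "B u 0 = u 0" by (simp add: B_def)

lemma B_Suc: "B u (Suc m) = B u m + B (\<lambda>k. u (Suc k)) m"
proof -
  have "B u (Suc m) = u 0 + (\<Sum>k\<le>m. u (Suc k) * of_nat (Suc m choose Suc k))"
    unfolding B_def by (subst sum.atMost_Suc_shift) simp
  also have "\<dots> = (u 0 + (\<Sum>k\<le>m. u (Suc k) * of_nat (m choose Suc k))) + B (\<lambda>k. u (Suc k)) m"
    by (simp add: B_def sum.distrib algebra_simps)
  also have "u 0 + (\<Sum>k\<le>m. u (Suc k) * of_nat (m choose Suc k)) = (\<Sum>k\<le>Suc m. u k * of_nat (m choose k))"
    by (subst sum.atMost_Suc_shift) simp
  also have "\<dots> = B u m" by (rule B_ext[symmetric]) simp
  finally show ?thesis .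
qed

lemma B_inj: assumes "\<And>m. B u m = B v m" shows "u k = v k"
proof (induction k rule: less_induct)
  case (less k)
  have "B u k = (\<Sum>j<k. u j * of_nat (k choose j)) + u k"
    unfolding B_def by (simp add: lessThan_Suc_atMost[symmetric])
  moreover have "B v k = (\<Sum>j<k. v j * of_nat (k choose j)) + v k"
    unfolding B_def by (simp add: lessThan_Suc_atMost[symmetric])
  moreover have "(\<Sum>j<k. u j * of_nat (k choose j)) = (\<Sum>j<k. v j * of_nat (k choose j))"
    using less by (intro sum.cong) auto
  ultimately show ?case using assms[of k] by simp
qed

definition E :: "'a::comm_ring_1 poly \<Rightarrow> nat \<Rightarrow> 'a" where
  "E p = B (coeff p)"

lemma E_add: "E (p + q) m = E p m + E q m"
  by (simp add: E_def B_def algebra_simps sum.distrib)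

lemma E_smult: "E (smult c p) m = c * E p m"
  by (simp add: E_def B_def sum_distrib_left algebra_simps)

lemma E_sum: "finite I \<Longrightarrow> E (\<Sum>i\<in>I. f i) m = (\<Sum>i\<in>I. E (f i) m)"
  by (induction I rule: finite_induct) (auto simp: E_add E_def B_def sum.distrib distrib_right)

lemma E_deg: "degree p \<le> N \<Longrightarrow> E p m = (\<Sum>k\<le>N. coeff p k * of_nat (m choose k))"
proof -
  assume N: "degree p \<le> N"
  have "E p m = (\<Sum>k\<le>max m N. coeff p k * of_nat (m choose k))"
    unfolding E_def by (rule B_ext) simp
  also have "\<dots> = (\<Sum>k\<le>N. coeff p k * of_nat (m choose k))"
    using N by (intro sum.mono_neutral_right) (auto simp: coeff_eq_0)
  finally show ?thesis .
qed

lemma E_monom: "E (monom 1 l) m = of_nat (m choose l)"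
proof -
  have "E (monom 1 l) m = (\<Sum>k\<le>l. coeff (monom 1 l) k * of_nat (m choose k))"
    by (rule E_deg) (simp add: degree_monom_le)
  also have "\<dots> = of_nat (m choose l)"
    by (subst sum.remove[of _ l]) (auto simp: coeff_monom)
  finally show ?thesis .
qed

lemma E_1: "E 1 m = 1"
  using E_monom[of 0 m] by (simp add: one_poly_eq_simps(1) monom_eq_1)

lemma coeff_mult_X: fixes p :: "'a::comm_ring_1 poly" shows "coeff (p * monom 1 1) (Suc k) = coeff p k" "coeff (p * monom 1 1) 0 = 0"
  by (simp_all add: mult.commute[of p] coeff_monom_mult)

lemma E_X: "E (p * monom 1 1) m = (\<Sum>n<m. E p n)"
proof (induction m)
  case 0 then show ?case by (simp add: E_def B_0 mult.commute[of p] coeff_monom_mult)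
next
  case (Suc m)
  then show ?case by (simp add: E_def B_Suc mult.commute[of p] coeff_monom_mult)
qed

lemma choose_tele: "(\<Sum>n<m. (n choose k) * (n choose Suc l) + (n choose Suc k) * (n choose l) + (n choose k) * (n choose l))
   = (m choose Suc k) * (m choose Suc l)"
  by (induction m) (simp_all add: algebra_simps)

lemma E_qsh: "E (qsh i j :: 'a::comm_ring_1 poly) m = of_nat (m choose i) * of_nat (m choose j)"
proof (induction i j arbitrary: m rule: qsh.induct)
  case (1 l) then show ?case by (simp add: E_monom)
next
  case (2 k) then show ?case by (simp add: E_monom)
next
  case (3 k l)
  have "E (qsh (Suc k) (Suc l) :: 'a poly) m = (\<Sum>n<m. E (qsh k (Suc l) + qsh (Suc k) l + qsh k l :: 'a poly) n)"
    by (simp only: qsh.simps E_X)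
  also have "\<dots> = (\<Sum>n<m. of_nat ((n choose k) * (n choose Suc l) + (n choose Suc k) * (n choose l) + (n choose k) * (n choose l)))"
    by (simp add: E_add 3)
  also have "\<dots> = of_nat (m choose Suc k) * of_nat (m choose Suc l)"
    by (simp only: of_nat_sum[symmetric] choose_tele of_nat_mult)
  finally show ?case .
qed

lemma E_qs: "E (qs p q) m = E p m * E (q :: 'a::comm_ring_1 poly) m"
proof -
  have "E (qs p q) m = (\<Sum>i\<le>degree p. \<Sum>j\<le>degree q. coeff p i * coeff q j * (of_nat (m choose i) * of_nat (m choose j)))"
    by (simp add: qs_def E_sum E_smult E_qsh)
  also have "\<dots> = (\<Sum>i\<le>degree p. coeff p i * of_nat (m choose i)) * (\<Sum>j\<le>degree q. coeff q j * of_nat (m choose j))"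
    by (simp add: sum_product algebra_simps)
  also have "\<dots> = E p m * E q m" by (simp only: E_deg[OF order_refl])
  finally show ?thesis .
qed

lemma E_foldr: "E (foldr qs ps 1) m = prod_list (map (\<lambda>p. E p m) (ps :: 'a::comm_ring_1 poly list))"
  by (induction ps) (simp_all add: E_1 E_qs)

primrec A :: "tree \<Rightarrow> nat \<Rightarrow> 'a::comm_ring_1" where
  "A (Node M) = (\<lambda>m. \<Sum>r<m. prod_mset (image_mset (\<lambda>t. A t r) M))"

definition AF :: "forest \<Rightarrow> nat \<Rightarrow> 'a::comm_ring_1" where
  "AF F m = prod_mset (image_mset (\<lambda>t. A t m) F)"

lemma A_Node: "A (Node M) m = (\<Sum>r<m. AF M r)"
  by (simp add: AF_def)

lemma E_lamp: "E (lamp p :: 'a::comm_ring_1 poly) m = A (np p) m"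
proof (induction p arbitrary: m)
  case (PNode ts)
  have "E (lamp (PNode ts) :: 'a poly) m = (\<Sum>n<m. prod_list (map (\<lambda>t. E (lamp t :: 'a poly) n) ts))"
    by (simp only: lamp.simps E_X E_foldr map_map o_def)
  also have "\<dots> = (\<Sum>n<m. prod_list (map (\<lambda>t. A (np t) n) ts))"
    using PNode by (intro sum.cong refl arg_cong[where f=prod_list] map_cong) auto
  also have "\<dots> = A (np (PNode ts)) m"
    by (simp add: prod_mset_prod_list[symmetric] image_mset.compositionality o_def)
  finally show ?case .
qed



lemma ppos_Nil[simp]: "ppos t []" by (rule ppos.intros)

lemma ppos_Cons[simp]: "ppos (PNode ts) (i # q) \<longleftrightarrow> i < length ts \<and> ppos (ts ! i) q"
  by (auto intro: ppos.intros elim: ppos.cases)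

lemma ppos_snoc: "ppos t (q @ [i]) \<Longrightarrow> ppos t (q @ [0]) \<and> ppos t q"
proof (induction q arbitrary: t)
  case Nil then show ?case by (cases t) auto
next
  case (Cons a q) then show ?case by (cases t) auto
qed

definition tot :: "nat list \<Rightarrow> nat list set \<Rightarrow> ptree \<Rightarrow> forest" where
  "tot p S t = fst (ind p S t) + snd (ind p S t)"

lemma ind_shift:
  "(\<And>q. p @ q \<in> S \<longleftrightarrow> p' @ q \<in> S') \<Longrightarrow> ind p S t = ind p' S' t"
proof (induction p S t arbitrary: p' S' rule: ind.induct)
  case (1 p S ts)
  have "p \<in> S \<longleftrightarrow> p' \<in> S'" using "1.prems"[of "[]"] by simp
  moreover have "map (\<lambda>i. ind (p @ [i]) S (ts ! i)) [0..<length ts] =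
                 map (\<lambda>i. ind (p' @ [i]) S' (ts ! i)) [0..<length ts]"
    by (intro map_cong refl "1.IH") (use "1.prems" in auto)
  ultimately show ?case by (simp only: ind.simps Let_def)
qed

lemma tot_shift:
  "(\<And>q. p @ q \<in> S \<longleftrightarrow> p' @ q \<in> S') \<Longrightarrow> tot p S t = tot p' S' t"
  unfolding tot_def using ind_shift by metis

lemma ind_empty: "(\<And>q. ppos t q \<Longrightarrow> p @ q \<notin> S) \<Longrightarrow> ind p S t = ({#}, {#})"
proof (induction p S t rule: ind.induct)
  case (1 p S ts)
  have "p \<notin> S" using "1.prems"[of "[]"] by simp
  moreover have eq: "map (\<lambda>i. ind (p @ [i]) S (ts ! i)) [0..<length ts] =
                 map (\<lambda>i. ({#}, {#})) [0..<length ts]"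
  proof (intro map_cong refl "1.IH")
    fix x q assume "x \<in> set [0..<length ts]" "ppos (ts ! x) q"
    then show "(p @ [x]) @ q \<notin> S" using "1.prems"[of "x # q"] by simp
  qed
  ultimately show ?case unfolding ind.simps Let_def eq by (simp add: o_def)
qed

lemma ind_full: "(\<And>q. ppos t q \<Longrightarrow> p @ q \<in> S) \<Longrightarrow> ind p S t = ({#np t#}, {#})"
proof (induction p S t rule: ind.induct)
  case (1 p S ts)
  have "p \<in> S" using "1.prems"[of "[]"] by simp
  moreover have eq: "map (\<lambda>i. ind (p @ [i]) S (ts ! i)) [0..<length ts] =
                 map (\<lambda>i. ({#np (ts ! i)#}, {#})) [0..<length ts]"
  proof (intro map_cong refl "1.IH")
    fix x q assume "x \<in> set [0..<length ts]" "ppos (ts ! x) q"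
    then show "(p @ [x]) @ q \<in> S" using "1.prems"[of "x # q"] by simp
  qed
  moreover have "map (\<lambda>i. {#np (ts ! i)#}) [0..<length ts] = map (\<lambda>t. {#np t#}) ts"
    by (rule nth_equalityI) auto
  moreover have "sum_list (map (\<lambda>t. {#np t#}) ts) = mset (map np ts)"
    by (induction ts) auto
  moreover have "sum_list (map (\<lambda>i. ({#}::forest)) [0..<length ts]) = {#}"
    by (induction ts rule: rev_induct) auto
  ultimately show ?case unfolding ind.simps Let_def eq
    by (simp only: map_map o_def fst_conv snd_conv if_True np.simps)
qed

definition att :: "nat list \<Rightarrow> nat list set \<Rightarrow> ptree list \<Rightarrow> forest" where
  "att p S ts = sum_list (map (\<lambda>i. fst (ind (p @ [i]) S (ts ! i))) [0..<length ts])"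
definition lo :: "nat list \<Rightarrow> nat list set \<Rightarrow> ptree list \<Rightarrow> forest" where
  "lo p S ts = sum_list (map (\<lambda>i. snd (ind (p @ [i]) S (ts ! i))) [0..<length ts])"

lemma ind_PNode: "ind p S (PNode ts) = (if p \<in> S then ({#Node (att p S ts)#}, lo p S ts) else ({#}, att p S ts + lo p S ts))"
  unfolding ind.simps Let_def att_def lo_def by (simp only: map_map o_def)

declare ind.simps[simp del]

lemma att_lo: "att p S ts + lo p S ts = sum_list (map (\<lambda>i. tot (p @ [i]) S (ts ! i)) [0..<length ts])"
  unfolding att_def lo_def tot_def by (simp only: sum_list_addf)

lemma tot_PNode: "tot p S (PNode ts) = (if p \<in> S then {#Node (att p S ts)#} + lo p S ts else att p S ts + lo p S ts)"
  by (simp add: tot_def ind_PNode)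

lemma mem_sum_list: "x \<in># sum_list (map f xs) \<longleftrightarrow> (\<exists>y\<in>set xs. x \<in># f y)"
  by (induction xs) auto

lemma restr_unfold: "restr ts S = sum_list (map (\<lambda>i. tot [i] S (ts ! i)) [0..<length ts])"
proof -
  have "restr ts S = att [] (S - {[]}) ts + lo [] (S - {[]}) ts"
    unfolding restr_def by (simp add: ind_PNode)
  also have "\<dots> = sum_list (map (\<lambda>i. tot [i] (S - {[]}) (ts ! i)) [0..<length ts])"
    by (simp only: att_lo append_Nil)
  also have "map (\<lambda>i. tot [i] (S - {[]}) (ts ! i)) [0..<length ts] = map (\<lambda>i. tot [i] S (ts ! i)) [0..<length ts]"
    by (intro map_cong refl tot_shift) auto
  finally show ?thesis .
qed

definition sh :: "nat list \<Rightarrow> nat list" where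
  "sh q = (case q of [] \<Rightarrow> [] | i # r \<Rightarrow> Suc i # r)"

lemma sh_simps[simp]: "sh [] = []" "sh (i # r) = Suc i # r" by (simp_all add: sh_def)

lemma inj_sh: "inj sh"
proof (rule injI)
  fix x y assume "sh x = sh y" then show "x = y"
    by (cases x; cases y) auto
qed

lemma restr_Cons: "restr (c # cs) S = tot [0] S c + restr cs {q. sh q \<in> S}"
proof -
  have "[0..<length (c # cs)] = 0 # map Suc [0..<length cs]"
    by (simp add: upt_conv_Cons map_Suc_upt del: upt_Suc)
  then have "restr (c # cs) S = tot [0] S c + sum_list (map (\<lambda>i. tot [Suc i] S (cs ! i)) [0..<length cs])"
    by (simp add: restr_unfold o_def)
  also have "map (\<lambda>i. tot [Suc i] S (cs ! i)) [0..<length cs] = map (\<lambda>i. tot [i] {q. sh q \<in> S} (cs ! i)) [0..<length cs]"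
    by (intro map_cong refl tot_shift) (auto simp: sh_def split: list.splits)
  finally show ?thesis by (simp add: restr_unfold)
qed

lemma tot_node: "p \<in> S \<Longrightarrow> snd (ind p S (PNode cs)) = {#} \<Longrightarrow> tot p S (PNode cs) = {#Node (restr cs {q. p @ q \<in> S})#}"
proof -
  assume p: "p \<in> S" and l: "snd (ind p S (PNode cs)) = {#}"
  then have lo0: "lo p S cs = {#}" by (simp add: ind_PNode)
  have "att p S cs = att p S cs + lo p S cs" using lo0 by simp
  also have "\<dots> = sum_list (map (\<lambda>i. tot (p @ [i]) S (cs ! i)) [0..<length cs])" by (rule att_lo)
  also have "map (\<lambda>i. tot (p @ [i]) S (cs ! i)) [0..<length cs] = map (\<lambda>i. tot [i] {q. p @ q \<in> S} (cs ! i)) [0..<length cs]"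
    by (intro map_cong refl tot_shift) (auto simp: sh_def split: list.splits)
  finally show ?thesis using p lo0 by (simp add: tot_PNode restr_unfold)
qed

lemma sum_list_zero_map: "(\<And>x. x \<in> set xs \<Longrightarrow> f x = ({#}::forest)) \<Longrightarrow> sum_list (map f xs) = {#}"
  by (induction xs) auto

lemma ind_loose: "(\<And>q i. ppos t (q @ [i]) \<Longrightarrow> p @ q \<in> S) \<Longrightarrow> snd (ind p S t) = {#}"
proof (induction p S t rule: ind.induct)
  case (1 p S ts)
  have ch: "snd (ind (p @ [x]) S (ts ! x)) = {#}" if "x < length ts" for x
  proof (rule "1.IH")
    show "x \<in> set [0..<length ts]" using that by simp
    fix q i assume "ppos (ts ! x) (q @ [i])"
    then show "(p @ [x]) @ q \<in> S" using "1.prems"[of "x # q" i] that by simp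
  qed
  then have lo0: "lo p S ts = {#}" unfolding lo_def by (intro sum_list_zero_map) auto
  show ?case
  proof (cases "p \<in> S")
    case True then show ?thesis by (simp add: ind_PNode lo0)
  next
    case False
    then have "ts = []" using "1.prems"[of "[]" 0] by (cases ts) auto
    then show ?thesis by (simp add: ind_PNode att_def lo_def)
  qed
qed

lemma tot_nonempty: "ppos t q \<Longrightarrow> p @ q \<in> S \<Longrightarrow> tot p S t \<noteq> {#}"
proof (induction p S t arbitrary: q rule: ind.induct)
  case (1 p S ts)
  show ?case
  proof (cases "p \<in> S")
    case True then show ?thesis by (simp add: tot_PNode)
  next
    case False
    then obtain j q' where q: "q = j # q'" using "1.prems" by (cases q) auto
    then have j: "j < length ts" "ppos (ts ! j) q'" using "1.prems" by auto
    have ne: "tot (p @ [j]) S (ts ! j) \<noteq> {#}"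
      using "1.IH"[of j q'] j "1.prems" q by simp
    have "tot p S (PNode ts) = sum_list (map (\<lambda>i. tot (p @ [i]) S (ts ! i)) [0..<length ts])"
      using False by (simp add: tot_PNode att_lo)
    moreover obtain x where "x \<in># tot (p @ [j]) S (ts ! j)" using ne by blast
    ultimately have "x \<in># tot p S (PNode ts)" using j by (auto simp: mem_sum_list)
    then show ?thesis by auto
  qed
qed

lemma fst_ind_empty: "fst (ind p S t) = {#} \<longleftrightarrow> p \<notin> S"
  by (cases t) (simp add: ind_PNode)

lemma tot_bullets:
  "(\<And>q i. ppos t (q @ [i]) \<Longrightarrow> p @ q \<in> S \<Longrightarrow> p @ q @ [i] \<notin> S) \<Longrightarrow> x \<in># tot p S t \<Longrightarrow> x = bullet"
proof (induction p S t arbitrary: x rule: ind.induct)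
  case (1 p S ts)
  have ch: "y = bullet" if "i < length ts" "y \<in># tot (p @ [i]) S (ts ! i)" for i y
  proof (rule "1.IH"[of i])
    show "i \<in> set [0..<length ts]" using that by simp
    show "y \<in># tot (p @ [i]) S (ts ! i)" by fact
    fix q j assume "ppos (ts ! i) (q @ [j])" "(p @ [i]) @ q \<in> S"
    then show "(p @ [i]) @ q @ [j] \<notin> S" using "1.prems"(1)[of "i # q" j] that by simp
  qed
  show ?case
  proof (cases "p \<in> S")
    case True
    have "att p S ts = {#}" unfolding att_def
    proof (intro sum_list_zero_map)
      fix i assume "i \<in> set [0..<length ts]"
      then have "p @ [i] \<notin> S" using "1.prems"(1)[of "[]" i] True by simp
      then show "fst (ind (p @ [i]) S (ts ! i)) = {#}" by (simp add: fst_ind_empty)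
    qed
    moreover have "x \<in># {#Node (att p S ts)#} + lo p S ts" using True "1.prems"(2) by (simp add: tot_PNode)
    ultimately show ?thesis using ch
      by (auto simp: bullet_def lo_def mem_sum_list tot_def)
  next
    case False
    then show ?thesis using "1.prems"(2) ch by (auto simp: tot_PNode att_lo mem_sum_list)
  qed
qed

lemma tot_nonbullet:
  "ppos t (q @ [i]) \<Longrightarrow> p @ q \<in> S \<Longrightarrow> p @ q @ [i] \<in> S \<Longrightarrow> \<exists>x\<in>#tot p S t. x \<noteq> bullet"
proof (induction p S t arbitrary: q rule: ind.induct)
  case (1 p S ts)
  show ?case
  proof (cases q)
    case Nil
    then have i: "i < length ts" "p \<in> S" "p @ [i] \<in> S" using "1.prems" by auto
    then have "fst (ind (p @ [i]) S (ts ! i)) \<noteq> {#}" by (simp add: fst_ind_empty)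
    then obtain y where "y \<in># fst (ind (p @ [i]) S (ts ! i))" by blast
    then have "y \<in># att p S ts" using i unfolding att_def by (auto simp: mem_sum_list)
    then have "att p S ts \<noteq> {#}" by auto
    then show ?thesis using i by (auto simp: tot_PNode bullet_def)
  next
    case (Cons j q')
    then have j: "j < length ts" "ppos (ts ! j) (q' @ [i])" using "1.prems" by auto
    obtain x where x: "x \<in># tot (p @ [j]) S (ts ! j)" "x \<noteq> bullet"
      using "1.IH"[of j q'] j "1.prems" Cons by auto
    show ?thesis
    proof (cases "p \<in> S")
      case False
      then show ?thesis using x j by (auto simp: tot_PNode att_lo mem_sum_list)
    next
      case True
      show ?thesis
      proof (cases "x \<in># snd (ind (p @ [j]) S (ts ! j))")
        case True
        then have "x \<in># lo p S ts" using j unfolding lo_def by (auto simp: mem_sum_list)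
        then show ?thesis using x \<open>p \<in> S\<close> by (auto simp: tot_PNode)
      next
        case False
        then have "x \<in># fst (ind (p @ [j]) S (ts ! j))" using x by (simp add: tot_def)
        then have "x \<in># att p S ts" using j unfolding att_def by (auto simp: mem_sum_list)
        then have "att p S ts \<noteq> {#}" by auto
        then show ?thesis using \<open>p \<in> S\<close> by (auto simp: tot_PNode bullet_def)
      qed
    qed
  qed
qed



definition posT :: "ptree \<Rightarrow> nat list set" where "posT t = {q. ppos t q}"
definition lvT :: "ptree \<Rightarrow> nat list set" where "lvT t = {q. ppos t q \<and> \<not> ppos t (q @ [0])}"
definition lvs :: "ptree list \<Rightarrow> nat list set" where "lvs ts = lvT (PNode ts) - {[]}"

lemma posT_PNode: "posT (PNode ts) = insert [] (\<Union>i<length ts. (Cons i) ` posT (ts ! i))"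
  unfolding posT_def
proof (intro set_eqI iffI)
  fix q assume "q \<in> {q. ppos (PNode ts) q}" then show "q \<in> insert [] (\<Union>i<length ts. (Cons i) ` {q. ppos (ts ! i) q})"
    by (cases q) auto
qed auto

lemma finite_posT: "finite (posT t)"
  by (induction t) (simp add: posT_PNode)

lemma finite_lvT: "finite (lvT t)"
  by (rule finite_subset[OF _ finite_posT[of t]]) (auto simp: lvT_def posT_def)

lemma finite_lvs: "finite (lvs ts)"
  using finite_lvT by (simp add: lvs_def)

lemma finite_fpos: "finite (fpos ts)"
  by (rule finite_subset[OF _ finite_posT[of "PNode ts"]]) (auto simp: fpos_def posT_def)

lemma fpos_Cons: "fpos (c # cs) = (Cons 0) ` posT c \<union> sh ` fpos cs"
proof (intro set_eqI iffI)
  fix q assume "q \<in> fpos (c # cs)"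
  then show "q \<in> (Cons 0) ` posT c \<union> sh ` fpos cs"
    apply (cases q; simp add: fpos_def posT_def)
    subgoal for i r by (cases i) (auto intro!: image_eqI[where x="_ # r"])
    done
next
  fix q assume "q \<in> (Cons 0) ` posT c \<union> sh ` fpos cs"
  then show "q \<in> fpos (c # cs)"
  proof
    assume "q \<in> sh ` fpos cs"
    then obtain y where "y \<in> fpos cs" "q = sh y" by blast
    then show ?thesis by (cases y) (auto simp: fpos_def)
  qed (auto simp: fpos_def posT_def)
qed

lemma lvs_Cons: "lvs (c # cs) = (Cons 0) ` lvT c \<union> sh ` lvs cs"
proof (intro set_eqI iffI)
  fix q assume "q \<in> lvs (c # cs)"
  then show "q \<in> (Cons 0) ` lvT c \<union> sh ` lvs cs"
    apply (cases q; simp add: lvs_def lvT_def)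
    subgoal for i r by (cases i) (auto intro!: image_eqI[where x="_ # r"])
    done
next
  fix q assume "q \<in> (Cons 0) ` lvT c \<union> sh ` lvs cs"
  then show "q \<in> lvs (c # cs)"
  proof
    assume "q \<in> sh ` lvs cs"
    then obtain y where "y \<in> lvs cs" "q = sh y" by blast
    then show ?thesis by (cases y) (auto simp: lvs_def lvT_def)
  qed (auto simp: lvs_def lvT_def)
qed

lemma lvs_sub_fpos: "lvs ts \<subseteq> fpos ts" by (auto simp: lvs_def lvT_def fpos_def)

lemma lvT_sub_posT: "lvT t \<subseteq> posT t" by (auto simp: lvT_def posT_def)

lemma sum_Pow_Un:
  assumes "finite P" "finite Q" "P \<inter> Q = {}"
  shows "(\<Sum>V\<in>Pow (P \<union> Q). f V) = (\<Sum>X\<in>Pow P. \<Sum>Y\<in>Pow Q. f (X \<union> Y))"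
proof -
  have bij: "bij_betw (\<lambda>(X, Y). X \<union> Y) (Pow P \<times> Pow Q) (Pow (P \<union> Q))"
    unfolding bij_betw_def
  proof
    show "inj_on (\<lambda>(X, Y). X \<union> Y) (Pow P \<times> Pow Q)"
    proof (rule inj_onI, clarsimp)
      fix X Y X' Y' assume *: "X \<subseteq> P" "Y \<subseteq> Q" "X' \<subseteq> P" "Y' \<subseteq> Q" "X \<union> Y = X' \<union> Y'"
      have "X = (X \<union> Y) \<inter> P" "X' = (X' \<union> Y') \<inter> P" "Y = (X \<union> Y) \<inter> Q" "Y' = (X' \<union> Y') \<inter> Q"
        using * assms(3) by auto
      then show "X = X' \<and> Y = Y'" using *(5) by metis
    qed
    show "(\<lambda>(X, Y). X \<union> Y) ` (Pow P \<times> Pow Q) = Pow (P \<union> Q)"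
    proof (intro set_eqI iffI)
      fix V assume "V \<in> Pow (P \<union> Q)"
      then have "V = (V \<inter> P) \<union> (V \<inter> Q)" "(V \<inter> P, V \<inter> Q) \<in> Pow P \<times> Pow Q" by auto
      then show "V \<in> (\<lambda>(X, Y). X \<union> Y) ` (Pow P \<times> Pow Q)" by (metis (no_types, lifting) case_prod_conv image_eqI)
    qed auto
  qed
  have "(\<Sum>X\<in>Pow P. \<Sum>Y\<in>Pow Q. f (X \<union> Y)) = (\<Sum>(X, Y)\<in>Pow P \<times> Pow Q. f (X \<union> Y))"
    by (rule sum.cartesian_product)
  also have "\<dots> = (\<Sum>V\<in>Pow (P \<union> Q). f V)"
    using sum.reindex_bij_betw[OF bij, of f] by (simp add: case_prod_beta')
  finally show ?thesis by simp
qed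

lemma sum_Pow_image: "inj_on g P \<Longrightarrow> (\<Sum>V\<in>Pow (g ` P). f V) = (\<Sum>X\<in>Pow P. f (g ` X))"
proof -
  assume inj: "inj_on g P"
  have "(\<Sum>V\<in>Pow (g ` P). f V) = (\<Sum>V\<in>image g ` Pow P. f V)" by (simp add: image_Pow_surj)
  also have "\<dots> = (\<Sum>X\<in>Pow P. f (g ` X))" by (rule sum.reindex_cong[OF inj_on_image_Pow[OF inj] refl refl])
  finally show ?thesis .
qed

lemma AF_plus: "AF (F + G) m = AF F m * AF G m" by (simp add: AF_def)
lemma AF_single: "AF {#t#} m = A t m" by (simp add: AF_def)
lemma AF_empty: "AF {#} m = 1" by (simp add: AF_def)
lemma A_0: "A t 0 = 0" by (cases t) simp
lemma AF_0: "F \<noteq> {#} \<Longrightarrow> AF F 0 = 0"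
proof -
  assume "F \<noteq> {#}"
  then obtain t G where "F = add_mset t G" by (metis multiset_cases)
  then show ?thesis by (simp add: AF_def A_0)
qed

lemma restr_minus: "S - {[]} = S' - {[]} \<Longrightarrow> restr ts S = restr ts S'"
  unfolding restr_def by simp



lemma ppos_leaf: "ppos (PNode []) x \<longleftrightarrow> x = []" by (cases x) auto

lemma sh_ne0: "sh y \<noteq> 0 # q" by (cases y) auto
lemma sh_ne0': "0 # q \<notin> sh ` Z" using sh_ne0 by (metis imageE)
lemma sh_notin0: "sh q \<notin> (Cons 0) ` Z" using sh_ne0 by (metis imageE)

lemma LC:
  assumes "\<And>c m. c \<in> set cs \<Longrightarrow> (\<Sum>W\<in>Pow (lvT c). AF (tot [] (posT c - W) c) m) = (A (np c) (Suc m) :: 'a::comm_ring_1)"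
  shows "(\<Sum>V\<in>Pow (lvs cs). AF (restr cs (fpos cs - V)) m) = (AF (mset (map np cs)) (Suc m) :: 'a)"
  using assms
proof (induction cs arbitrary: m)
  case Nil
  have "lvs [] = {}" by (auto simp: lvs_def lvT_def ppos_leaf)
  then show ?case by (simp add: restr_unfold AF_empty)
next
  case (Cons c cs)
  have key: "AF (restr (c # cs) (fpos (c # cs) - ((Cons 0) ` X \<union> sh ` Y))) m =
      (AF (tot [] (posT c - X) c) m :: 'a) * AF (restr cs (fpos cs - Y)) m" for X Y
  proof -
    let ?S = "fpos (c # cs) - ((Cons 0) ` X \<union> sh ` Y)"
    have 1: "tot [0] ?S c = tot [] (posT c - X) c"
      by (rule tot_shift) (auto simp: fpos_Cons sh_ne0')
    have 2: "{q. sh q \<in> ?S} = fpos cs - Y"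
      using inj_sh by (auto simp: fpos_Cons sh_notin0 inj_image_mem_iff)
    show ?thesis by (simp only: restr_Cons 1 2 AF_plus)
  qed
  have disj: "(Cons 0) ` lvT c \<inter> sh ` lvs cs = {}"
  proof (rule equals0I)
    fix x assume "x \<in> (Cons 0) ` lvT c \<inter> sh ` lvs cs"
    then obtain y where "x = sh y" "x \<in> (Cons 0) ` lvT c" by blast
    then show False using sh_notin0[of y "lvT c"] by simp
  qed
  have "(\<Sum>V\<in>Pow (lvs (c # cs)). AF (restr (c # cs) (fpos (c # cs) - V)) m :: 'a) =
    (\<Sum>X\<in>Pow ((Cons 0) ` lvT c). \<Sum>Y\<in>Pow (sh ` lvs cs). AF (restr (c # cs) (fpos (c # cs) - (X \<union> Y))) m)"
    unfolding lvs_Cons by (rule sum_Pow_Un) (auto simp: finite_lvT finite_lvs disj)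
  also have "\<dots> = (\<Sum>X\<in>Pow (lvT c). \<Sum>Y\<in>Pow (lvs cs). AF (restr (c # cs) (fpos (c # cs) - ((Cons 0) ` X \<union> sh ` Y))) m)"
  proof -
    have i: "inj_on sh (lvs cs)" using inj_sh by (simp add: inj_on_def inj_def)
    show ?thesis by (simp add: sum_Pow_image inj_on_def sum_Pow_image[OF i])
  qed
  also have "\<dots> = (\<Sum>X\<in>Pow (lvT c). AF (tot [] (posT c - X) c) m) * (\<Sum>Y\<in>Pow (lvs cs). AF (restr cs (fpos cs - Y)) m)"
    by (simp add: key sum_product)
  also have "\<dots> = A (np c) (Suc m) * AF (mset (map np cs)) (Suc m)"
    using Cons by simp
  also have "\<dots> = AF (mset (map np (c # cs))) (Suc m)"
    by (simp add: AF_def)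
  finally show ?case .
qed

lemma TC: "(\<Sum>W\<in>Pow (lvT t). AF (tot [] (posT t - W) t) m) = (A (np t) (Suc m) :: 'a::comm_ring_1)"
proof (induction t arbitrary: m)
  case (PNode cs)
  show ?case
  proof (cases "cs = []")
    case True
    have lv: "lvT (PNode []) = {[]}" by (auto simp: lvT_def ppos_leaf)
    have ps: "posT (PNode []) = {[]}" by (auto simp: posT_def elim: ppos.cases)
    have t1: "tot [] {[]} (PNode []) = {#Node {#}#}" by (simp add: tot_PNode att_def lo_def)
    have t2: "tot [] {} (PNode []) = {#}" by (simp add: tot_PNode att_def lo_def)
    have "Pow {[]::nat list} = {{}, {[]}}" by auto
    then show ?thesis using True
      by (simp add: lv ps t1 t2 AF_single AF_empty)
  next
    case False
    have lv: "lvT (PNode cs) = lvs cs" using False by (cases cs) (auto simp: lvs_def lvT_def)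
    have each: "AF (tot [] (posT (PNode cs) - W) (PNode cs)) m' = (\<Sum>r<m'. AF (restr cs (fpos cs - W)) r :: 'a)"
      if W: "W \<subseteq> lvs cs" for W m'
    proof -
      let ?S = "posT (PNode cs) - W"
      have r: "[] \<in> ?S" using W by (auto simp: posT_def lvs_def)
      have l: "snd (ind [] ?S (PNode cs)) = {#}"
      proof (rule ind_loose)
        fix q i assume "ppos (PNode cs) (q @ [i])"
        then have "ppos (PNode cs) q" "ppos (PNode cs) (q @ [0])" using ppos_snoc by auto
        then show "[] @ q \<in> ?S" using W by (auto simp: posT_def lvs_def lvT_def)
      qed
      have "restr cs {q. [] @ q \<in> ?S} = restr cs (fpos cs - W)"
        by (rule restr_minus) (auto simp: posT_def fpos_def)
      then show ?thesis using tot_node[OF r l] by (simp add: AF_single AF_def)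
    qed
    have "(\<Sum>W\<in>Pow (lvT (PNode cs)). AF (tot [] (posT (PNode cs) - W) (PNode cs)) m :: 'a)
        = (\<Sum>W\<in>Pow (lvs cs). \<Sum>r<m. AF (restr cs (fpos cs - W)) r)"
      unfolding lv by (intro sum.cong refl each) auto
    also have "\<dots> = (\<Sum>r<m. \<Sum>W\<in>Pow (lvs cs). AF (restr cs (fpos cs - W)) r)"
      by (rule sum.swap)
    also have "\<dots> = (\<Sum>r<m. AF (mset (map np cs)) (Suc r))"
      by (intro sum.cong refl LC PNode.IH) auto
    also have "\<dots> = A (np (PNode cs)) (Suc m)"
    proof -
      have ne: "mset (map np cs) \<noteq> {#}" using False by simp
      show ?thesis by (simp only: np.simps A_Node sum.lessThan_Suc_shift AF_0[OF ne] add_0)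
    qed
    finally show ?thesis .
  qed
qed



lemma np_surj: "\<exists>p. np p = t"
proof (induction t)
  case (Node M)
  obtain xs where xs: "mset xs = M" using ex_mset by blast
  define ps where "ps = map (\<lambda>x. SOME p. np p = x) xs"
  have "map np ps = xs"
    unfolding ps_def map_map
  proof (rule map_idI)
    fix x assume "x \<in> set xs"
    then have "\<exists>p. np p = x" using Node xs by auto
    then show "(np \<circ> (\<lambda>x. SOME p. np p = x)) x = x" using someI_ex[OF \<open>\<exists>p. np p = x\<close>] by simp
  qed
  then have "np (PNode ps) = Node M" using xs by simp
  then show ?case by blast
qed

lemma forest_surj: "\<exists>ts. mset (map np ts) = F"
proof -
  obtain xs where xs: "mset xs = F" using ex_mset by blast
  have "map np (map (\<lambda>x. SOME p. np p = x) xs) = xs"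
    unfolding map_map
  proof (rule map_idI)
    fix x assume "x \<in> set xs"
    show "(np \<circ> (\<lambda>x. SOME p. np p = x)) x = x" using someI_ex[OF np_surj[of x]] by simp
  qed
  then show ?thesis using xs by metis
qed

lemma rep_ok: "mset (map np (rep F)) = F"
  unfolding rep_def using forest_surj by (rule someI_ex)

lemma rep_ok'[simp]: "image_mset np (mset (rep F)) = F"
  using rep_ok by simp

lemma Lambda_eq: "Lambda t = lamp (SOME p. np p = t)" by (simp add: Lambda_def)
lemma np_some: "np (SOME p. np p = t) = t" using np_surj by (rule someI_ex)

lemma restr_full: "restr ts (fpos ts) = mset (map np ts)"
proof -
  have "map (\<lambda>i. tot [i] (fpos ts) (ts ! i)) [0..<length ts] = map (\<lambda>i. {#np (ts ! i)#}) [0..<length ts]"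
  proof (intro map_cong refl)
    fix i assume "i \<in> set [0..<length ts]"
    then have "ind [i] (fpos ts) (ts ! i) = ({#np (ts ! i)#}, {#})"
      by (intro ind_full) (auto simp: fpos_def)
    then show "tot [i] (fpos ts) (ts ! i) = {#np (ts ! i)#}" by (simp add: tot_def)
  qed
  moreover have "map (\<lambda>i. {#np (ts ! i)#}) [0..<length ts] = map (\<lambda>t. {#np t#}) ts"
    by (rule nth_equalityI) auto
  moreover have "sum_list (map (\<lambda>t. {#np t#}) ts) = mset (map np ts)"
    by (induction ts) auto
  ultimately show ?thesis by (simp add: restr_unfold)
qed

lemma restr_emptyset: "restr ts {} = {#}"
  unfolding restr_unfold by (rule sum_list_zero_map) (simp add: tot_def ind_empty)

lemma mem_restr: "x \<in># restr ts S \<longleftrightarrow> (\<exists>i<length ts. x \<in># tot [i] S (ts ! i))"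
  by (auto simp: restr_unfold mem_sum_list)

lemma ppos_app: "ppos t (q @ k # r) \<Longrightarrow> ppos t (q @ [k])"
proof (induction q arbitrary: t)
  case Nil then show ?case by (cases t) auto
next
  case (Cons a q)
  obtain ts where t: "t = PNode ts" by (cases t)
  then have "a < length ts" "ppos (ts ! a) (q @ k # r)" using Cons.prems by auto
  then show ?case using Cons.IH[of "ts ! a"] t by simp
qed

abbreviation D :: "forest \<Rightarrow> 'a::comm_ring_1" where "D \<equiv> (\<lambda>G. delta G - eps G)"

lemma delta_bullets: "(\<And>x. x \<in># F \<Longrightarrow> x = bullet) \<Longrightarrow> delta F = 1"
  unfolding delta_def by (induction F) (auto simp: deltaT_def)

lemma delta_nonbullet: "x \<in># F \<Longrightarrow> x \<noteq> bullet \<Longrightarrow> delta F = 0"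
proof -
  assume "x \<in># F" "x \<noteq> bullet"
  then obtain G where "F = add_mset x G" by (metis multi_member_split)
  then show ?thesis using \<open>x \<noteq> bullet\<close> by (simp add: delta_def deltaT_def)
qed

lemma D_restr:
  assumes adm: "admissible ts V"
  shows "(D (restr ts V) :: 'a::comm_ring_1) = (if V \<in> Pow (lvs ts) - {{}} then 1 else 0)"
proof (cases "V = {}")
  case True then show ?thesis by (simp add: restr_emptyset delta_def eps_def)
next
  case False
  then obtain v where v: "v \<in> V" by blast
  have Vf: "V \<subseteq> fpos ts" using adm by (simp add: admissible_def)
  then obtain i q where iq: "v = i # q" "i < length ts" "ppos (ts ! i) q" using v
    by (cases v) (auto simp: fpos_def)
  have ne: "restr ts V \<noteq> {#}"
  proof -
    have "tot [i] V (ts ! i) \<noteq> {#}" using tot_nonempty[of "ts ! i" q "[i]" V] iq v by simp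
    then obtain x where "x \<in># tot [i] V (ts ! i)" by blast
    then have "x \<in># restr ts V" using iq by (auto simp: mem_restr)
    then show ?thesis by auto
  qed
  then have e: "eps (restr ts V) = 0" by (simp add: eps_def)
  show ?thesis
  proof (cases "V \<subseteq> lvs ts")
    case True
    have "x = bullet" if xr: "x \<in># restr ts V" for x
    proof -
      obtain j where j: "j < length ts" "x \<in># tot [j] V (ts ! j)" using xr unfolding mem_restr by blast
      show ?thesis
      proof (rule tot_bullets[OF _ j(2)])
        fix r k assume "ppos (ts ! j) (r @ [k])" "[j] @ r \<in> V"
        then have "ppos (ts ! j) (r @ [0])" "j # r \<in> lvs ts" using ppos_snoc True by auto
        then show "[j] @ r @ [k] \<notin> V" using j by (auto simp: lvs_def lvT_def)
      qed
    qed
    then have "delta (restr ts V) = (1::'a)" by (rule delta_bullets)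
    then show ?thesis using True False e by simp
  next
    case nl: False
    then obtain w where w: "w \<in> V" "w \<notin> lvs ts" by blast
    then have wf: "w \<in> fpos ts" using Vf by auto
    then have "ppos (PNode ts) (w @ [0])" using w by (auto simp: lvs_def lvT_def fpos_def)
    then have w0f: "w @ [0] \<in> fpos ts" by (auto simp: fpos_def)
    have "strict_prefix w (w @ [0])" by (simp add: strict_prefix_def)
    then have w0: "w @ [0] \<in> V" using adm w0f w by (auto simp: admissible_def)
    obtain j r where jr: "w = j # r" "j < length ts" "ppos (ts ! j) r" using wf by (cases w) (auto simp: fpos_def)
    have "ppos (ts ! j) (r @ [0])" using w0f jr by (auto simp: fpos_def)
    then obtain x where x: "x \<in># tot [j] V (ts ! j)" "x \<noteq> bullet"
      using tot_nonbullet[of "ts ! j" r 0 "[j]" V] w w0 jr by auto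
    then have "x \<in># restr ts V" using jr by (auto simp: mem_restr)
    then have "delta (restr ts V) = (0::'a)" using x by (intro delta_nonbullet)
    then show ?thesis using nl e by auto
  qed
qed

lemma adm_leaves: "V \<in> Pow (lvs ts) \<Longrightarrow> admissible ts V"
  unfolding admissible_def
proof (intro conjI ballI)
  assume V: "V \<in> Pow (lvs ts)"
  then show "V \<subseteq> fpos ts" using lvs_sub_fpos by blast
  fix v w assume "v \<in> V" "w \<in> fpos ts - V"
  show "\<not> strict_prefix v w"
  proof
    assume "strict_prefix v w"
    then obtain k r where "w = v @ k # r"
      by (metis append_Nil2 neq_Nil_conv prefix_def strict_prefix_def)
    then have "ppos (PNode ts) (v @ [k])" using \<open>w \<in> fpos ts - V\<close> ppos_app by (auto simp: fpos_def)
    then have "ppos (PNode ts) (v @ [0])" using ppos_snoc by blast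
    then show False using \<open>v \<in> V\<close> V by (auto simp: lvs_def lvT_def)
  qed
qed

lemma conv_D: "conv D g F = (\<Sum>V\<in>Pow (lvs (rep F)) - {{}}. g (restr (rep F) (fpos (rep F) - V)))"
proof -
  let ?ts = "rep F"
  have fin: "finite {V. admissible ?ts V}"
    by (rule finite_subset[of _ "Pow (fpos ?ts)"]) (auto simp: admissible_def finite_fpos)
  have "conv D g F = (\<Sum>V\<in>{V. admissible ?ts V}. D (restr ?ts V) * g (restr ?ts (fpos ?ts - V)))"
    by (simp add: conv_def Let_def)
  also have "\<dots> = (\<Sum>V\<in>Pow (lvs ?ts) - {{}}. g (restr ?ts (fpos ?ts - V)))"
    by (rule sum.mono_neutral_cong_right[OF fin]) (auto simp: D_restr adm_leaves)
  finally show ?thesis .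
qed

lemma B_sum: "finite I \<Longrightarrow> B (\<lambda>k. \<Sum>i\<in>I. f i k) m = (\<Sum>i\<in>I. B (f i) m)"
  by (induction I rule: finite_induct) (auto simp: B_def sum.distrib distrib_right)

lemma B_cpow: "B (\<lambda>k. cpow D k F) m = (AF F m :: 'a::comm_ring_1)"
proof (induction m arbitrary: F)
  case 0
  show ?case by (cases "F = {#}") (simp_all add: B_0 eps_def AF_empty AF_0)
next
  case (Suc m)
  let ?ts = "rep F"
  let ?R = "\<lambda>V. restr ?ts (fpos ?ts - V)"
  have fin: "finite (Pow (lvs ?ts) - {{}})" by (simp add: finite_lvs)
  have "(B (\<lambda>k. cpow D k F) (Suc m) :: 'a) = B (\<lambda>k. cpow D k F) m + B (\<lambda>k. \<Sum>V\<in>Pow (lvs ?ts) - {{}}. cpow D k (?R V)) m"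
    by (simp add: B_Suc conv_D)
  also have "\<dots> = B (\<lambda>k. cpow D k (?R {})) m + (\<Sum>V\<in>Pow (lvs ?ts) - {{}}. B (\<lambda>k. cpow D k (?R V)) m)"
    by (simp add: B_sum[OF fin] restr_full rep_ok)
  also have "\<dots> = (\<Sum>V\<in>Pow (lvs ?ts). B (\<lambda>k. cpow D k (?R V)) m)"
    by (subst sum.remove[of _ "{}"]) (auto simp: finite_lvs)
  also have "\<dots> = (\<Sum>V\<in>Pow (lvs ?ts). AF (?R V) m)" using Suc.IH by (intro sum.cong refl) blast
  also have "\<dots> = AF (mset (map np ?ts)) (Suc m)" by (rule LC) (rule TC)
  finally show ?case by (simp add: rep_ok)
qed

lemma coeff_Lambda: "coeff (Lambda t :: 'a::comm_ring_1 poly) k = cpow D k {#t#}"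
proof (rule B_inj)
  fix m
  have "B (coeff (Lambda t :: 'a poly)) m = A t m"
    using E_lamp[of "SOME p. np p = t"] by (simp add: E_def Lambda_eq np_some)
  also have "\<dots> = B (\<lambda>k. cpow D k {#t#}) m" by (simp add: B_cpow AF_single)
  finally show "B (coeff (Lambda t :: 'a poly)) m = B (\<lambda>k. cpow D k {#t#}) m" .
qed

theorem mainTheorem17:
  fixes t :: tree
  shows "(omega {#t#} :: 'k::field_char_0) =
    (\<Sum>s\<in>{1..degree (Lambda t :: 'k poly)}. (-1) ^ (s + 1) / of_nat s * coeff (Lambda t :: 'k poly) s)"
proof -
  have ot: "omega_term n {#t#} = ((-1) ^ (n + 1) / of_nat n * coeff (Lambda t :: 'k poly) n :: 'k)" for n
    by (simp add: omega_term_def coeff_Lambda)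
  have sub: "{n. 1 \<le> n \<and> omega_term n {#t#} \<noteq> (0::'k)} \<subseteq> {1..degree (Lambda t :: 'k poly)}"
  proof
    fix n assume "n \<in> {n. 1 \<le> n \<and> omega_term n {#t#} \<noteq> (0::'k)}"
    then have "1 \<le> n" "coeff (Lambda t :: 'k poly) n \<noteq> 0" by (auto simp: ot)
    then show "n \<in> {1..degree (Lambda t :: 'k poly)}" by (auto intro: le_degree)
  qed
  have "(omega {#t#} :: 'k) = (\<Sum>n\<in>{1..degree (Lambda t :: 'k poly)}. omega_term n {#t#})"
    unfolding omega_def by (rule sum.mono_neutral_left) (use sub in auto)
  also have "\<dots> = (\<Sum>s\<in>{1..degree (Lambda t :: 'k poly)}. (-1) ^ (s + 1) / of_nat s * coeff (Lambda t :: 'k poly) s)"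
    by (simp add: ot)
  finally show ?thesis .
qed

end
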